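(* Let $0<\beta'<\beta<1$. Then $\mathcal{R}_{\mathcal{X}}(\beta')$ satisfies the $\beta$-aggregation condition; in particular, for all $x\in\mathcal{X}$ and all $z'<F_x^{-1}(\beta)$, $$\mathbb{P}\big(Y\in\{y: z'\le f(x,y)\le F_x^{-1}(\beta)\}\cap\mathcal{R}_{\mathcal{X}}(\beta')\big)>0.$$
   Context: Let $(\Omega,\mathcal{F},\mathbb{P})$ be a probability space, $Y$ a random vector in $\mathbb{R}^d$, $\mathcal{X}\subseteq\mathbb{R}^k$ a set of decisions and $f:\mathcal{X}\times\mathbb{R}^d\to\mathbb{R}$ a loss function with $f(x,Y)$ measurable for all $x$. Write $F_x(z)=\mathbb{P}(f(x,Y)\le z)$ and $F_x^{-1}(\gamma)=\inf\{z: F_x(z)\ge\gamma\}$. For $0<\gamma<1$ the $\gamma$-risk region of $x$ is $\mathcal{R}_x(\gamma)=\{y\in\mathbb{R}^d: f(x,y)\ge F_x^{-1}(\gamma)\}$ and $\mathcal{R}_{\mathcal{X}}(\gamma)=\bigcup_{x\in\mathcal{X}}\mathcal{R}_x(\gamma)$. A set $\mathcal{R}$ with $\mathcal{R}_{\mathcal{X}}(\beta)\subseteq\mathcal{R}\subset\mathbb{R}^d$ satisfies the $\beta$-aggregation condition if for all $x\in\mathcal{X}$ and all $z'<F_x^{-1}(\beta)$, $\mathbb{P}\big(Y\in\{y: z'<f(x,y)\le F_x^{-1}(\beta)\}\cap\mathcal{R}\big)>0$. *)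

theory Defs
  imports "HOL-Probability.Probability"
begin

definition loss_cdf :: "'w measure \<Rightarrow> ('w \<Rightarrow> 'y) \<Rightarrow> ('x \<Rightarrow> 'y \<Rightarrow> real) \<Rightarrow> 'x \<Rightarrow> real \<Rightarrow> real" where
  "loss_cdf M Y f x z = measure M {\<omega> \<in> space M. f x (Y \<omega>) \<le> z}"

definition loss_quantile :: "'w measure \<Rightarrow> ('w \<Rightarrow> 'y) \<Rightarrow> ('x \<Rightarrow> 'y \<Rightarrow> real) \<Rightarrow> 'x \<Rightarrow> real \<Rightarrow> real" where
  "loss_quantile M Y f x \<gamma> = Inf {z. loss_cdf M Y f x z \<ge> \<gamma>}"

definition risk_region :: "'w measure \<Rightarrow> ('w \<Rightarrow> 'y) \<Rightarrow> ('x \<Rightarrow> 'y \<Rightarrow> real) \<Rightarrow> 'x \<Rightarrow> real \<Rightarrow> 'y set" where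
  "risk_region M Y f x \<gamma> = {y. f x y \<ge> loss_quantile M Y f x \<gamma>}"

definition risk_region_set :: "'w measure \<Rightarrow> ('w \<Rightarrow> 'y) \<Rightarrow> ('x \<Rightarrow> 'y \<Rightarrow> real) \<Rightarrow> 'x set \<Rightarrow> real \<Rightarrow> 'y set" where
  "risk_region_set M Y f X \<gamma> = (\<Union>x\<in>X. risk_region M Y f x \<gamma>)"

definition aggregation_condition :: "'w measure \<Rightarrow> ('w \<Rightarrow> 'y) \<Rightarrow> ('x \<Rightarrow> 'y \<Rightarrow> real) \<Rightarrow> 'x set \<Rightarrow> real \<Rightarrow> 'y set \<Rightarrow> bool" where
  "aggregation_condition M Y f X \<beta> R \<longleftrightarrow>
     risk_region_set M Y f X \<beta> \<subseteq> R \<and>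
     (\<forall>x\<in>X. \<forall>z'. z' < loss_quantile M Y f x \<beta> \<longrightarrow>
        measure M {\<omega> \<in> space M. Y \<omega> \<in> {y. z' < f x y \<and> f x y \<le> loss_quantile M Y f x \<beta>} \<inter> R} > 0)"

end

theory Submission
  imports Defs
begin

context real_distribution begin

lemma q_props:
  assumes "0 < g" "g < 1"
  defines "S \<equiv> {z. cdf M z \<ge> g}"
  shows "S \<noteq> {}" "bdd_below S" "cdf M (Inf S) \<ge> g"
    "\<And>z. z < Inf S \<Longrightarrow> cdf M z < g"
    "measure M {..<Inf S} \<le> g"
proof -
  have "eventually (\<lambda>z. cdf M z > g) at_top"
    using cdf_lim_at_top_prob assms(2) order_tendstoD(1) by blast
  then obtain a where a: "\<And>z. z \<ge> a \<Longrightarrow> cdf M z > g" by (auto simp: eventually_at_top_linorder)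
  show ne: "S \<noteq> {}" using a[of a] by (auto simp: S_def intro!: exI[of _ a] less_imp_le)
  have "eventually (\<lambda>z. cdf M z < g) at_bot"
    using cdf_lim_at_bot assms(1) order_tendstoD(2) by blast
  then obtain b where b: "\<And>z. z \<le> b \<Longrightarrow> cdf M z < g" by (auto simp: eventually_at_bot_linorder)
  show bb: "bdd_below S" unfolding bdd_below_def S_def
    by (rule exI[of _ b]) (metis b mem_Collect_eq not_le not_less less_le_not_le order.strict_iff_not nle_le)
  show lt: "\<And>z. z < Inf S \<Longrightarrow> cdf M z < g"
  proof (rule ccontr)
    fix z assume "z < Inf S" "\<not> cdf M z < g"
    then have "z \<in> S" by (auto simp: S_def)
    then have "Inf S \<le> z" using bb by (simp add: cInf_lower)
    with \<open>z < Inf S\<close> show False by simp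
  qed
  show "cdf M (Inf S) \<ge> g"
  proof (rule ccontr)
    assume "\<not> g \<le> cdf M (Inf S)"
    then have "cdf M (Inf S) < g" by simp
    moreover have "(cdf M \<longlongrightarrow> cdf M (Inf S)) (at_right (Inf S))"
      using cdf_is_right_cont by (simp add: continuous_within)
    ultimately have "eventually (\<lambda>z. cdf M z < g) (at_right (Inf S))"
      using order_tendstoD(2) by blast
    then obtain d where d: "d > Inf S" "\<And>z. Inf S < z \<Longrightarrow> z < d \<Longrightarrow> cdf M z < g"
      by (auto simp: eventually_at_right_field)
    have "Inf S \<ge> (Inf S + d)/2"
    proof (rule cInf_greatest[OF ne])
      fix z assume "z \<in> S"
      then have "cdf M z \<ge> g" by (simp add: S_def)
      show "(Inf S + d)/2 \<le> z"
      proof (rule ccontr)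
        assume "\<not> (Inf S + d)/2 \<le> z"
        then have "cdf M z \<le> cdf M ((Inf S + d)/2)" by (intro cdf_nondecreasing) simp
        also have "\<dots> < g" using d by (intro d(2)) auto
        finally show False using \<open>cdf M z \<ge> g\<close> by simp
      qed
    qed
    with d(1) show False by simp
  qed
  show "measure M {..<Inf S} \<le> g"
  proof (rule tendsto_upperbound[OF cdf_at_left])
    show "eventually (\<lambda>z. cdf M z \<le> g) (at_left (Inf S))"
      using lt by (auto simp: eventually_at_left_field intro!: exI[of _ "Inf S - 1"] less_imp_le)
  qed simp
qed

lemma q_mono:
  assumes "0 < g" "g \<le> h" "h < 1"
  shows "Inf {z. cdf M z \<ge> g} \<le> Inf {z. cdf M z \<ge> h}"
proof (rule cInf_superset_mono)
  show "{z. cdf M z \<ge> h} \<noteq> {}" using q_props(1)[of h] assms by simp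
  show "bdd_below {z. cdf M z \<ge> g}" using q_props(2)[of g] assms by simp
qed (use assms in auto)

end

lemma per_x:
  fixes f :: "'x \<Rightarrow> 'y \<Rightarrow> real"
  assumes P: "prob_space M" and meas: "(\<lambda>\<omega>. f x (Y \<omega>)) \<in> borel_measurable M"
    and b: "0 < \<beta>'" "\<beta>' \<le> \<beta>" "\<beta> < 1"
  shows "loss_quantile M Y f x \<beta>' \<le> loss_quantile M Y f x \<beta>"
    "z' < loss_quantile M Y f x \<beta> \<Longrightarrow> \<beta>' < \<beta> \<Longrightarrow>
      measure M {\<omega>\<in>space M. z' < f x (Y \<omega>) \<and> f x (Y \<omega>) \<le> loss_quantile M Y f x \<beta>
         \<and> loss_quantile M Y f x \<beta>' \<le> f x (Y \<omega>)} > 0"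
proof -
  interpret prob_space M by fact
  define g where "g = (\<lambda>\<omega>. f x (Y \<omega>))"
  define N where "N = distr M borel g"
  interpret N: real_distribution N unfolding N_def g_def using meas by simp
  have gm: "g \<in> borel_measurable M" using meas by (simp add: g_def)
  have mN: "\<And>A. A \<in> sets borel \<Longrightarrow> measure N A = measure M (g -` A \<inter> space M)"
    unfolding N_def using gm by (simp add: measure_distr)
  have cdfeq: "loss_cdf M Y f x z = cdf N z" for z
    unfolding loss_cdf_def cdf_def mN[OF atMost_borel]
    by (rule arg_cong[where f="measure M"]) (auto simp: g_def)
  have qeq: "loss_quantile M Y f x \<gamma> = Inf {z. cdf N z \<ge> \<gamma>}" for \<gamma>
    unfolding loss_quantile_def cdfeq ..
  show "loss_quantile M Y f x \<beta>' \<le> loss_quantile M Y f x \<beta>"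
    unfolding qeq using N.q_mono b by simp
  assume z: "z' < loss_quantile M Y f x \<beta>" and bb: "\<beta>' < \<beta>"
  define Q where "Q = Inf {z. cdf N z \<ge> \<beta>}"
  define Q' where "Q' = Inf {z. cdf N z \<ge> \<beta>'}"
  have zQ: "z' < Q" using z qeq Q_def by simp
  have cQ: "cdf N Q \<ge> \<beta>" unfolding Q_def using N.q_props(3)[of \<beta>] b bb by simp
  have cz: "cdf N z' < \<beta>" unfolding Q_def using N.q_props(4)[of \<beta> z'] b bb zQ Q_def by simp
  have cQ': "measure N {..<Q'} \<le> \<beta>'" unfolding Q'_def using N.q_props(5)[of \<beta>'] b by simp
  define B where "B = {z'<..Q} \<inter> {Q'..}"
  have Bs: "B \<in> sets borel" unfolding B_def by simp
  have "measure M {\<omega>\<in>space M. z' < f x (Y \<omega>) \<and> f x (Y \<omega>) \<le> loss_quantile M Y f x \<beta>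
         \<and> loss_quantile M Y f x \<beta>' \<le> f x (Y \<omega>)} = measure N B"
    unfolding mN[OF Bs] qeq Q_def[symmetric] Q'_def[symmetric]
    by (rule arg_cong[where f="measure M"]) (auto simp: g_def B_def)
  moreover have "measure N B > 0"
  proof (cases "Q' \<le> z'")
    case True
    have "{..Q} \<subseteq> B \<union> {..z'}" using True by (auto simp: B_def)
    then have "cdf N Q \<le> measure N (B \<union> {..z'})"
      unfolding cdf_def by (intro N.finite_measure_mono) (auto simp: Bs)
    also have "\<dots> \<le> measure N B + cdf N z'"
      unfolding cdf_def by (intro measure_subadditive) (auto simp: Bs N.emeasure_finite)
    finally show ?thesis using cQ cz by simp
  next
    case False
    have "{..Q} \<subseteq> B \<union> {..<Q'}" using False by (auto simp: B_def)
    then have "cdf N Q \<le> measure N (B \<union> {..<Q'})"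
      unfolding cdf_def by (intro N.finite_measure_mono) (auto simp: Bs)
    also have "\<dots> \<le> measure N B + measure N {..<Q'}"
      by (intro measure_subadditive) (auto simp: Bs N.emeasure_finite)
    finally show ?thesis using cQ cQ' bb by simp
  qed
  ultimately show "measure M {\<omega>\<in>space M. z' < f x (Y \<omega>) \<and> f x (Y \<omega>) \<le> loss_quantile M Y f x \<beta>
         \<and> loss_quantile M Y f x \<beta>' \<le> f x (Y \<omega>)} > 0" by simp
qed

theorem mainTheorem2:
  fixes M :: "'w measure"
    and Y :: "'w \<Rightarrow> real ^ 'd"
    and f :: "real ^ 'k \<Rightarrow> real ^ 'd \<Rightarrow> real"
    and X :: "(real ^ 'k) set"
    and \<beta> \<beta>' :: real
  assumes "prob_space M"
    and "Y \<in> borel_measurable M"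
    and "\<And>x. (\<lambda>\<omega>. f x (Y \<omega>)) \<in> borel_measurable M"
    and "{\<omega> \<in> space M. Y \<omega> \<in> risk_region_set M Y f X \<beta>'} \<in> sets M"
    and "0 < \<beta>'" and "\<beta>' < \<beta>" and "\<beta> < 1"
  shows "aggregation_condition M Y f X \<beta> (risk_region_set M Y f X \<beta>') \<and>
    (\<forall>x\<in>X. \<forall>z'. z' < loss_quantile M Y f x \<beta> \<longrightarrow>
       measure M {\<omega> \<in> space M. Y \<omega> \<in> {y. z' \<le> f x y \<and> f x y \<le> loss_quantile M Y f x \<beta>}
                                     \<inter> risk_region_set M Y f X \<beta>'} > 0)"
proof -
  interpret prob_space M by fact
  let ?R = "risk_region_set M Y f X \<beta>'"
  have sub: "risk_region_set M Y f X \<beta> \<subseteq> ?R"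
  proof
    fix y assume "y \<in> risk_region_set M Y f X \<beta>"
    then obtain x where x: "x \<in> X" "f x y \<ge> loss_quantile M Y f x \<beta>"
      by (auto simp: risk_region_set_def risk_region_def)
    have "loss_quantile M Y f x \<beta>' \<le> loss_quantile M Y f x \<beta>"
      using per_x(1)[where M=M and f=f and x=x and Y=Y and \<beta>'=\<beta>' and \<beta>=\<beta>, OF assms(1) assms(3)] assms by simp
    with x show "y \<in> ?R" unfolding risk_region_set_def risk_region_def by (simp add: Bex_def) (meson order.trans)
  qed
  have main: "measure M {\<omega> \<in> space M. Y \<omega> \<in> {y. z' < f x y \<and> f x y \<le> loss_quantile M Y f x \<beta>} \<inter> ?R} > 0
      \<and> measure M {\<omega> \<in> space M. Y \<omega> \<in> {y. z' \<le> f x y \<and> f x y \<le> loss_quantile M Y f x \<beta>} \<inter> ?R} > 0"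
    if x: "x \<in> X" and z: "z' < loss_quantile M Y f x \<beta>" for x z'
  proof -
    let ?Q = "loss_quantile M Y f x \<beta>" and ?Q' = "loss_quantile M Y f x \<beta>'"
    let ?B = "{\<omega>\<in>space M. z' < f x (Y \<omega>) \<and> f x (Y \<omega>) \<le> ?Q \<and> ?Q' \<le> f x (Y \<omega>)}"
    have pos: "measure M ?B > 0"
      using per_x(2)[where M=M and f=f and x=x and Y=Y and \<beta>'=\<beta>' and \<beta>=\<beta> and z'=z', OF assms(1) assms(3)] assms z by simp
    have gm: "(\<lambda>\<omega>. f x (Y \<omega>)) \<in> borel_measurable M" by (rule assms(3))
    have s1: "{\<omega> \<in> space M. z' < f x (Y \<omega>) \<and> f x (Y \<omega>) \<le> ?Q} \<in> sets M"
      using gm by measurable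
    have s2: "{\<omega> \<in> space M. z' \<le> f x (Y \<omega>) \<and> f x (Y \<omega>) \<le> ?Q} \<in> sets M"
      using gm by measurable
    have e1: "{\<omega> \<in> space M. Y \<omega> \<in> {y. z' < f x y \<and> f x y \<le> ?Q} \<inter> ?R}
        = {\<omega> \<in> space M. z' < f x (Y \<omega>) \<and> f x (Y \<omega>) \<le> ?Q} \<inter> {\<omega> \<in> space M. Y \<omega> \<in> ?R}" by auto
    have e2: "{\<omega> \<in> space M. Y \<omega> \<in> {y. z' \<le> f x y \<and> f x y \<le> ?Q} \<inter> ?R}
        = {\<omega> \<in> space M. z' \<le> f x (Y \<omega>) \<and> f x (Y \<omega>) \<le> ?Q} \<inter> {\<omega> \<in> space M. Y \<omega> \<in> ?R}" by auto
    have inR: "?Q' \<le> f x y \<Longrightarrow> y \<in> ?R" for y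
      using x by (auto simp: risk_region_set_def risk_region_def)
    have "measure M ?B \<le> measure M {\<omega> \<in> space M. Y \<omega> \<in> {y. z' < f x y \<and> f x y \<le> ?Q} \<inter> ?R}"
      unfolding e1 by (intro finite_measure_mono) (use inR s1 assms(4) in auto)
    moreover have "measure M ?B \<le> measure M {\<omega> \<in> space M. Y \<omega> \<in> {y. z' \<le> f x y \<and> f x y \<le> ?Q} \<inter> ?R}"
      unfolding e2 by (intro finite_measure_mono) (use inR s2 assms(4) in auto)
    ultimately show ?thesis using pos by linarith
  qed
  show ?thesis unfolding aggregation_condition_def using sub main by blast
qed

end
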